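(* Let $G\subseteq\ell^2$ be a dense $G_\delta$ set and $f:G\to\{1,2\}^\omega$ a continuous function such that $y\notin\mathsf{HC}(f(y))$ for each $y\in G$, $\mathsf{HC}(f(y))\neq\emptyset$ for each $y\in G$, and for each nonempty open $U\subseteq\ell^2$ the image $f[U\cap G]$ contains at least two elements. Then there is a perfect set $P\subseteq G$ (a closed subset of $\ell^2$ with no isolated points) such that $x\notin\mathsf{HC}(f(x))$ for all $x\in P$, and $x\in\mathsf{HC}(f(y))$ for all distinct $x,y\in P$.
   Context: $\omega=\{0,1,2,\dots\}$; $\ell^2$ is the Hilbert space of square-summable real sequences indexed by $\omega$ with its norm topology; $\{1,2\}^\omega$ has the product topology. For $w\in\{1,2\}^\omega$, $B_w:\ell^2\to\ell^2$ is $B_w(x)(i)=w(i)\,x(i+1)$, and $\mathsf{HC}(w)$ is the set of $x\in\ell^2$ such that $\{B_w^k(x):k\in\omega\}$ is dense in $\ell^2$. *)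

theory Defs
  imports "HOL-Analysis.Analysis"
begin

typedef l2 = "{x::nat \<Rightarrow> real. summable (\<lambda>i. (x i)\<^sup>2)}"
  morphisms l2_seq Abs_l2
  by (rule exI[of _ "\<lambda>_. 0"]) simp

setup_lifting type_definition_l2

lemma summable_sq_add:
  fixes x y :: "nat \<Rightarrow> real"
  assumes "summable (\<lambda>i. (x i)\<^sup>2)" "summable (\<lambda>i. (y i)\<^sup>2)"
  shows "summable (\<lambda>i. (x i + y i)\<^sup>2)"
proof (rule summable_comparison_test')
  show "summable (\<lambda>i. 2 * (x i)\<^sup>2 + 2 * (y i)\<^sup>2)"
    using assms by (intro summable_add summable_mult) auto
  fix n
  have "(x n + y n)\<^sup>2 \<le> 2 * (x n)\<^sup>2 + 2 * (y n)\<^sup>2"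
    using sum_squares_ge_zero[of "x n - y n" 0] by (simp add: power2_eq_square algebra_simps)
  then show "norm ((x n + y n)\<^sup>2) \<le> 2 * (x n)\<^sup>2 + 2 * (y n)\<^sup>2" by simp
qed

lemma summable_sq_scale:
  fixes x :: "nat \<Rightarrow> real"
  assumes "summable (\<lambda>i. (x i)\<^sup>2)"
  shows "summable (\<lambda>i. (c * x i)\<^sup>2)"
  using summable_mult[OF assms, of "c\<^sup>2"] by (simp add: power_mult_distrib)

lemma sqrt_suminf_sq_triangle:
  fixes x y :: "nat \<Rightarrow> real"
  assumes sx: "summable (\<lambda>i. (x i)\<^sup>2)" and sy: "summable (\<lambda>i. (y i)\<^sup>2)"
  shows "sqrt (\<Sum>i. (x i + y i)\<^sup>2) \<le> sqrt (\<Sum>i. (x i)\<^sup>2) + sqrt (\<Sum>i. (y i)\<^sup>2)"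
proof -
  let ?a = "sqrt (\<Sum>i. (x i)\<^sup>2)" and ?b = "sqrt (\<Sum>i. (y i)\<^sup>2)"
  have "(\<Sum>i. (x i + y i)\<^sup>2) \<le> (?a + ?b)\<^sup>2"
  proof (rule suminf_le_const)
    show "summable (\<lambda>i. (x i + y i)\<^sup>2)" using summable_sq_add[OF sx sy] .
    fix n
    have "L2_set (\<lambda>i. x i + y i) {..<n} \<le> L2_set x {..<n} + L2_set y {..<n}"
      by (rule L2_set_triangle_ineq)
    also have "L2_set x {..<n} \<le> ?a"
      unfolding L2_set_def
      by (intro real_sqrt_le_mono sum_le_suminf sx) auto
    also have "L2_set y {..<n} \<le> ?b"
      unfolding L2_set_def
      by (intro real_sqrt_le_mono sum_le_suminf sy) auto
    finally have h: "L2_set (\<lambda>i. x i + y i) {..<n} \<le> ?a + ?b" by simp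
    have "(\<Sum>i<n. (x i + y i)\<^sup>2) = (L2_set (\<lambda>i. x i + y i) {..<n})\<^sup>2"
      unfolding L2_set_def by (simp add: sum_nonneg)
    also have "\<dots> \<le> (?a + ?b)\<^sup>2"
      using h by (intro power_mono) auto
    finally show "(\<Sum>i<n. (x i + y i)\<^sup>2) \<le> (?a + ?b)\<^sup>2" .
  qed
  then have "sqrt (\<Sum>i. (x i + y i)\<^sup>2) \<le> sqrt ((?a + ?b)\<^sup>2)"
    by (rule real_sqrt_le_mono)
  also have "\<dots> = ?a + ?b"
    by (intro real_sqrt_abs[THEN trans] abs_of_nonneg add_nonneg_nonneg real_sqrt_ge_zero suminf_nonneg sx sy) auto
  finally show ?thesis .
qed

lemma sqrt_suminf_sq_scale:
  fixes x :: "nat \<Rightarrow> real"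
  assumes sx: "summable (\<lambda>i. (x i)\<^sup>2)"
  shows "sqrt (\<Sum>i. (r * x i)\<^sup>2) = \<bar>r\<bar> * sqrt (\<Sum>i. (x i)\<^sup>2)"
proof -
  have "(\<Sum>i. (r * x i)\<^sup>2) = r\<^sup>2 * (\<Sum>i. (x i)\<^sup>2)"
    using suminf_mult[OF sx, of "r\<^sup>2"] by (simp add: power_mult_distrib)
  then show ?thesis
    by (metis real_sqrt_mult real_sqrt_abs)
qed

instantiation l2 :: real_normed_vector
begin

lift_definition zero_l2 :: l2 is "\<lambda>_. 0" by simp
lift_definition plus_l2 :: "l2 \<Rightarrow> l2 \<Rightarrow> l2" is "\<lambda>x y i. x i + y i"
  by (rule summable_sq_add)
lift_definition uminus_l2 :: "l2 \<Rightarrow> l2" is "\<lambda>x i. - x i" by simp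
lift_definition minus_l2 :: "l2 \<Rightarrow> l2 \<Rightarrow> l2" is "\<lambda>x y i. x i - y i"
  using summable_sq_add[of _ "\<lambda>i. - _ i"] by simp
lift_definition scaleR_l2 :: "real \<Rightarrow> l2 \<Rightarrow> l2" is "\<lambda>c x i. c * x i"
  by (rule summable_sq_scale)
lift_definition norm_l2 :: "l2 \<Rightarrow> real" is "\<lambda>x. sqrt (\<Sum>i. (x i)\<^sup>2)" .
definition sgn_l2 :: "l2 \<Rightarrow> l2" where "sgn_l2 x = scaleR (inverse (norm x)) x"
definition dist_l2 :: "l2 \<Rightarrow> l2 \<Rightarrow> real" where "dist_l2 x y = norm (x - y)"
definition uniformity_l2 :: "(l2 \<times> l2) filter"
  where "uniformity_l2 = (INF e\<in>{0<..}. principal {(x, y). dist x y < e})"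
definition open_l2 :: "l2 set \<Rightarrow> bool"
  where "open_l2 U = (\<forall>x\<in>U. \<forall>\<^sub>F (x', y) in uniformity. x' = x \<longrightarrow> y \<in> U)"

instance
proof
  fix a b c :: l2 and r s :: real
  show "a + b + c = a + (b + c)" by transfer (simp add: algebra_simps)
  show "a + b = b + a" by transfer (simp add: algebra_simps)
  show "0 + a = a" by transfer simp
  show "- a + a = 0" by transfer simp
  show "a - b = a + - b" by transfer simp
  show "r *\<^sub>R (a + b) = r *\<^sub>R a + r *\<^sub>R b" by transfer (simp add: algebra_simps)
  show "(r + s) *\<^sub>R a = r *\<^sub>R a + s *\<^sub>R a" by transfer (simp add: algebra_simps)
  show "r *\<^sub>R s *\<^sub>R a = (r * s) *\<^sub>R a" by transfer (simp add: algebra_simps)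
  show "1 *\<^sub>R a = a" by transfer simp
  show "sgn a = inverse (norm a) *\<^sub>R a" by (simp add: sgn_l2_def)
  show "dist a b = norm (a - b)" by (simp add: dist_l2_def)
  show "uniformity = (INF e\<in>{0<..}. principal {(x, y :: l2). dist x y < e})"
    by (simp add: uniformity_l2_def)
  show "open U = (\<forall>x\<in>U. \<forall>\<^sub>F (x', y) in uniformity. x' = x \<longrightarrow> y \<in> U)" for U :: "l2 set"
    by (simp add: open_l2_def)
  show "(norm a = 0) = (a = 0)"
  proof transfer
    fix x :: "nat \<Rightarrow> real" assume sx: "summable (\<lambda>i. (x i)\<^sup>2)"
    have "(sqrt (\<Sum>i. (x i)\<^sup>2) = 0) \<longleftrightarrow> (\<Sum>i. (x i)\<^sup>2) = 0" by simp
    also have "\<dots> \<longleftrightarrow> (\<forall>i. (x i)\<^sup>2 = 0)"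
      using suminf_eq_zero_iff[OF sx] by simp
    also have "\<dots> \<longleftrightarrow> x = (\<lambda>_. 0)" by (auto simp: fun_eq_iff)
    finally show "(sqrt (\<Sum>i. (x i)\<^sup>2) = 0) = (x = (\<lambda>_. 0))" .
  qed
  show "norm (a + b) \<le> norm a + norm b"
    by transfer (rule sqrt_suminf_sq_triangle)
  show "norm (r *\<^sub>R a) = \<bar>r\<bar> * norm a"
    by transfer (rule sqrt_suminf_sq_scale)
qed

end

text \<open>Weights are sequences w :: nat => real; the statement only uses weights with values in
  {1,2}, for which the weighted backward shift maps l2 into l2.\<close>

definition B :: "(nat \<Rightarrow> real) \<Rightarrow> l2 \<Rightarrow> l2" where
  "B w x = Abs_l2 (\<lambda>i. w i * l2_seq x (Suc i))"

definition HC :: "(nat \<Rightarrow> real) \<Rightarrow> l2 set" where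
  "HC w = {x. closure (range (\<lambda>k. (B w ^^ k) x)) = UNIV}"

definition perfect_set :: "'a::topological_space set \<Rightarrow> bool" where
  "perfect_set P \<longleftrightarrow> closed P \<and> (\<forall>x\<in>P. x islimpt P)"

end

theory Submission
  imports Defs
begin

lemma l2_summable: "summable (\<lambda>i. (l2_seq x i)\<^sup>2)"
  using l2_seq by auto

lemma norm_l2_eq: "norm x = sqrt (\<Sum>i. (l2_seq x i)\<^sup>2)"
  by (simp add: norm_l2.rep_eq)

lemma l2_seq_minus[simp]: "l2_seq (x - y) i = l2_seq x i - l2_seq y i"
  by (simp add: minus_l2.rep_eq)
lemma l2_seq_plus[simp]: "l2_seq (x + y) i = l2_seq x i + l2_seq y i"
  by (simp add: plus_l2.rep_eq)
lemma l2_seq_scaleR[simp]: "l2_seq (c *\<^sub>R x) i = c * l2_seq x i"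
  by (simp add: scaleR_l2.rep_eq)
lemma l2_seq_zero[simp]: "l2_seq 0 i = 0"
  by (simp add: zero_l2.rep_eq)

lemma l2_eqI: "(\<And>i. l2_seq x i = l2_seq y i) \<Longrightarrow> x = y"
  by (metis l2_seq_inject ext)

lemma Abs_l2_inv: "summable (\<lambda>i. (z i)\<^sup>2) \<Longrightarrow> l2_seq (Abs_l2 z) = z"
  by (simp add: Abs_l2_inverse)

lemma norm_sq_l2: "(norm x)\<^sup>2 = (\<Sum>i. (l2_seq x i)\<^sup>2)"
  by (simp add: norm_l2_eq suminf_nonneg l2_summable)

lemma partial_le_norm2: "(\<Sum>i<M. (l2_seq x i)\<^sup>2) \<le> (norm x)\<^sup>2"
  unfolding norm_sq_l2 by (intro sum_le_suminf l2_summable) auto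

lemma coord_le_norm: "\<bar>l2_seq x i\<bar> \<le> norm x"
proof -
  have "(l2_seq x i)\<^sup>2 = (\<Sum>j<Suc i. if j = i then (l2_seq x j)\<^sup>2 else 0)" by simp
  also have "\<dots> \<le> (\<Sum>j<Suc i. (l2_seq x j)\<^sup>2)" by (intro sum_mono) auto
  also have "\<dots> \<le> (norm x)\<^sup>2" by (rule partial_le_norm2)
  finally show ?thesis by (metis abs_norm_cancel power2_le_imp_le norm_ge_zero real_sqrt_abs real_sqrt_le_iff abs_ge_zero) 
qed

lemma fin_supp_summable:
  fixes z :: "nat \<Rightarrow> real"
  assumes "\<And>i. i \<ge> M \<Longrightarrow> z i = 0"
  shows "summable (\<lambda>i. (z i)\<^sup>2)"
  by (rule summable_finite[of "{..<M}"]) (use assms in auto)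

lemma fin_supp_suminf:
  fixes z :: "nat \<Rightarrow> real"
  assumes "\<And>i. i \<ge> M \<Longrightarrow> z i = 0"
  shows "(\<Sum>i. (z i)\<^sup>2) = (\<Sum>i<M. (z i)\<^sup>2)"
  by (rule suminf_finite) (use assms in auto)

lemma l2_Cauchy_conv:
  fixes X :: "nat \<Rightarrow> l2"
  assumes C: "Cauchy X"
  shows "convergent X"
proof -
  have "\<forall>i. convergent (\<lambda>n. l2_seq (X n) i)"
  proof
    fix i
    have "Cauchy (\<lambda>n. l2_seq (X n) i)"
    proof (rule metric_CauchyI)
      fix e :: real assume "e > 0"
      then obtain N where N: "\<forall>m\<ge>N. \<forall>n\<ge>N. dist (X m) (X n) < e"
        using C metric_CauchyD by blast
      show "\<exists>N. \<forall>m\<ge>N. \<forall>n\<ge>N. dist (l2_seq (X m) i) (l2_seq (X n) i) < e"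
      proof (intro exI allI impI)
        fix m n assume "m \<ge> N" "n \<ge> N"
        have "\<bar>l2_seq (X m - X n) i\<bar> \<le> norm (X m - X n)" by (rule coord_le_norm)
        then show "dist (l2_seq (X m) i) (l2_seq (X n) i) < e"
          using N \<open>m \<ge> N\<close> \<open>n \<ge> N\<close> by (simp add: dist_real_def dist_norm) (meson le_less_trans)
      qed
    qed
    then show "convergent (\<lambda>n. l2_seq (X n) i)" by (simp add: Cauchy_convergent_iff)
  qed
  then obtain z where z: "\<And>i. (\<lambda>n. l2_seq (X n) i) \<longlonglongrightarrow> z i"
    unfolding convergent_def by metis
  have key: "\<exists>N. \<forall>n\<ge>N. summable (\<lambda>i. (l2_seq (X n) i - z i)\<^sup>2) \<and> (\<Sum>i. (l2_seq (X n) i - z i)\<^sup>2) \<le> e\<^sup>2"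
    if "e > 0" for e :: real
  proof -
    obtain N where N: "\<forall>m\<ge>N. \<forall>n\<ge>N. dist (X m) (X n) < e"
      using C metric_CauchyD \<open>e > 0\<close> by blast
    have part: "(\<Sum>i<M. (l2_seq (X n) i - z i)\<^sup>2) \<le> e\<^sup>2" if "n \<ge> N" for n M
    proof -
      have lim: "(\<lambda>m. \<Sum>i<M. (l2_seq (X n) i - l2_seq (X m) i)\<^sup>2) \<longlonglongrightarrow> (\<Sum>i<M. (l2_seq (X n) i - z i)\<^sup>2)"
        by (intro tendsto_intros z)
      have "\<forall>m\<ge>N. (\<Sum>i<M. (l2_seq (X n) i - l2_seq (X m) i)\<^sup>2) \<le> e\<^sup>2"
      proof (intro allI impI)
        fix m assume "m \<ge> N"
        have "(\<Sum>i<M. (l2_seq (X n) i - l2_seq (X m) i)\<^sup>2) = (\<Sum>i<M. (l2_seq (X n - X m) i)\<^sup>2)" by simp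
        also have "\<dots> \<le> (norm (X n - X m))\<^sup>2" by (rule partial_le_norm2)
        also have "\<dots> \<le> e\<^sup>2" using N \<open>m \<ge> N\<close> \<open>n \<ge> N\<close>
          by (intro power_mono) (auto simp: dist_norm less_imp_le)
        finally show "(\<Sum>i<M. (l2_seq (X n) i - l2_seq (X m) i)\<^sup>2) \<le> e\<^sup>2" .
      qed
      then show ?thesis
        using LIMSEQ_le_const2[OF lim] by blast
    qed
    show ?thesis
    proof (intro exI allI impI conjI)
      fix n assume "n \<ge> N"
      show sm: "summable (\<lambda>i. (l2_seq (X n) i - z i)\<^sup>2)"
        by (rule summableI_nonneg_bounded[where x="e\<^sup>2"]) (use part \<open>n \<ge> N\<close> in auto)
      show "(\<Sum>i. (l2_seq (X n) i - z i)\<^sup>2) \<le> e\<^sup>2"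
        by (rule suminf_le_const[OF sm]) (use part \<open>n \<ge> N\<close> in auto)
    qed
  qed
  from key[of 1] obtain N0 where N0: "summable (\<lambda>i. (l2_seq (X N0) i - z i)\<^sup>2)" by auto
  define Z where "Z = X N0 - Abs_l2 (\<lambda>i. l2_seq (X N0) i - z i)"
  have Zs: "l2_seq Z i = z i" for i
    unfolding Z_def using Abs_l2_inv[OF N0] by simp
  have "X \<longlonglongrightarrow> Z"
  proof (rule metric_LIMSEQ_I)
    fix r :: real assume "r > 0"
    then obtain N where N: "\<forall>n\<ge>N. summable (\<lambda>i. (l2_seq (X n) i - z i)\<^sup>2) \<and> (\<Sum>i. (l2_seq (X n) i - z i)\<^sup>2) \<le> (r/2)\<^sup>2"
      using key[of "r/2"] by auto
    show "\<exists>N. \<forall>n\<ge>N. dist (X n) Z < r"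
    proof (intro exI allI impI)
      fix n assume "n \<ge> N"
      have "dist (X n) Z = sqrt (\<Sum>i. (l2_seq (X n) i - z i)\<^sup>2)"
        by (simp add: dist_norm norm_l2_eq Zs)
      also have "\<dots> \<le> sqrt ((r/2)\<^sup>2)" using N \<open>n \<ge> N\<close> by (intro real_sqrt_le_mono) auto
      also have "\<dots> < r" using \<open>r > 0\<close> by simp
      finally show "dist (X n) Z < r" .
    qed
  qed
  then show ?thesis by (auto simp: convergent_def)
qed

instance l2 :: complete_space
  by standard (rule l2_Cauchy_conv)

definition e0 :: l2 where "e0 = Abs_l2 (\<lambda>i. if i = 0 then 1 else 0)"

lemma norm_e0: "norm e0 = 1"
proof -
  have s: "summable (\<lambda>i. ((\<lambda>i. if i = 0 then 1 else 0 :: real) i)\<^sup>2)"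
    by (rule fin_supp_summable[of 1]) auto
  have "norm e0 = sqrt (\<Sum>i<Suc 0. ((\<lambda>i. if i = 0 then 1 else 0 :: real) i)\<^sup>2)"
    unfolding norm_l2_eq e0_def Abs_l2_inv[OF s]
    by (subst fin_supp_suminf[of "Suc 0"]) auto
  then show ?thesis by simp
qed

instance l2 :: perfect_space
proof
  fix x :: l2
  show "\<not> open {x}"
  proof
    assume "open {x}"
    then obtain e where e: "e > 0" "ball x e \<subseteq> {x}"
      using open_contains_ball by blast
    have "x + (e/2) *\<^sub>R e0 \<in> ball x e"
      using e by (simp add: dist_norm norm_e0)
    moreover have "x + (e/2) *\<^sub>R e0 \<noteq> x"
      using e norm_e0 by auto
    ultimately show False using e by blast
  qed
qed

definition vec :: "rat list \<Rightarrow> l2" where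
  "vec qs = Abs_l2 (\<lambda>i. if i < length qs then real_of_rat (qs ! i) else 0)"

lemma trunc_approx:
  fixes x :: l2
  assumes "e > 0"
  shows "\<exists>M. norm (x - Abs_l2 (\<lambda>i. if i < M then l2_seq x i else 0)) < e"
proof -
  obtain M where M: "\<forall>n\<ge>M. norm (\<Sum>i. (l2_seq x (i + n))\<^sup>2) < e\<^sup>2"
    using suminf_exist_split[of "e\<^sup>2" "\<lambda>i. (l2_seq x i)\<^sup>2"] assms l2_summable by auto
  define t where "t = (\<lambda>i. if i < M then l2_seq x i else 0)"
  have st: "summable (\<lambda>i. (t i)\<^sup>2)" by (rule fin_supp_summable[of M]) (auto simp: t_def)
  have d: "l2_seq (x - Abs_l2 t) i = (if i < M then 0 else l2_seq x i)" for i
    using Abs_l2_inv[OF st] by (simp add: t_def)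
  have sd: "summable (\<lambda>i. (if i < M then 0 else l2_seq x i)\<^sup>2)"
    using l2_summable[of "x - Abs_l2 t"] d by simp
  have "(\<Sum>i. (if i < M then 0 else l2_seq x i)\<^sup>2) = (\<Sum>i. (if i + M < M then 0 else l2_seq x (i + M))\<^sup>2) + (\<Sum>i<M. (if i < M then 0 else l2_seq x i)\<^sup>2)"
    using suminf_split_initial_segment[OF sd, of M] by simp
  also have "\<dots> = (\<Sum>i. (l2_seq x (i + M))\<^sup>2)" by simp
  finally have eq: "(\<Sum>i. (if i < M then 0 else l2_seq x i)\<^sup>2) = (\<Sum>i. (l2_seq x (i + M))\<^sup>2)" .
  have "norm (x - Abs_l2 t) = sqrt (\<Sum>i. (l2_seq x (i + M))\<^sup>2)"
    unfolding norm_l2_eq d eq ..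
  also have "\<dots> < sqrt (e\<^sup>2)"
    using M by (intro real_sqrt_less_mono) auto
  also have "\<dots> = e" using assms by simp
  finally show ?thesis unfolding t_def by blast
qed

lemma vec_dense:
  fixes x :: l2
  assumes "e > 0"
  shows "\<exists>qs. dist x (vec qs) < e"
proof -
  obtain M where M: "norm (x - Abs_l2 (\<lambda>i. if i < M then l2_seq x i else 0)) < e/2"
    using trunc_approx[of "e/2" x] assms by auto
  define t where "t = (\<lambda>i. if i < M then l2_seq x i else 0)"
  define \<delta> where "\<delta> = e / (2 * (M + 1))"
  have dpos: "\<delta> > 0" using assms by (simp add: \<delta>_def)
  have "\<forall>i. \<exists>q. \<bar>l2_seq x i - real_of_rat q\<bar> < \<delta>"
  proof
    fix i
    obtain r where r: "r \<in> \<rat>" "l2_seq x i - \<delta> < r" "r < l2_seq x i + \<delta>"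
      using Rats_dense_in_real[of "l2_seq x i - \<delta>" "l2_seq x i + \<delta>"] dpos by auto
    then obtain q where "r = real_of_rat q" by (auto elim: Rats_cases)
    then show "\<exists>q. \<bar>l2_seq x i - real_of_rat q\<bar> < \<delta>" using r by (intro exI[of _ q]) auto
  qed
  then obtain Q where Q: "\<And>i. \<bar>l2_seq x i - real_of_rat (Q i)\<bar> < \<delta>" by metis
  define qs where "qs = map Q [0..<M]"
  define v where "v = (\<lambda>i. if i < length qs then real_of_rat (qs ! i) else 0)"
  have st: "summable (\<lambda>i. (t i)\<^sup>2)" by (rule fin_supp_summable[of M]) (auto simp: t_def)
  have sv: "summable (\<lambda>i. (v i)\<^sup>2)" by (rule fin_supp_summable[of M]) (auto simp: v_def qs_def)
  have dd: "l2_seq (Abs_l2 t - vec qs) i = (if i < M then l2_seq x i - real_of_rat (Q i) else 0)" for i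
    using Abs_l2_inv[OF st] Abs_l2_inv[OF sv] unfolding vec_def v_def[symmetric]
    by (simp add: t_def v_def qs_def)
  have "norm (Abs_l2 t - vec qs) = sqrt (\<Sum>i<M. (if i < M then l2_seq x i - real_of_rat (Q i) else 0)\<^sup>2)"
    unfolding norm_l2_eq dd by (subst fin_supp_suminf[of M]) auto
  also have "\<dots> \<le> sqrt (\<Sum>i<M. \<delta>\<^sup>2)"
  proof (intro real_sqrt_le_mono sum_mono)
    fix i assume "i \<in> {..<M}"
    show "(if i < M then l2_seq x i - real_of_rat (Q i) else 0)\<^sup>2 \<le> \<delta>\<^sup>2"
      using Q[of i] dpos abs_le_square_iff[of "l2_seq x i - real_of_rat (Q i)" \<delta>] by auto
  qed
  also have "\<dots> = sqrt (M * \<delta>\<^sup>2)" by simp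
  also have "\<dots> \<le> sqrt ((M+1)\<^sup>2 * \<delta>\<^sup>2)"
    by (intro real_sqrt_le_mono mult_right_mono) (auto simp: power2_eq_square)
  also have "\<dots> = (M+1) * \<delta>" using dpos by (simp add: real_sqrt_mult)
  also have "\<dots> = e/2" by (simp add: \<delta>_def field_simps)
  finally have "norm (Abs_l2 t - vec qs) \<le> e/2" .
  moreover have "norm (x - Abs_l2 t) < e/2" using M t_def by simp
  ultimately have "norm (x - vec qs) < e"
    using norm_triangle_lt[of "x - Abs_l2 t" "Abs_l2 t - vec qs" e] by simp
  then show ?thesis by (auto simp: dist_norm)
qed

definition Wb :: "nat \<Rightarrow> l2 set" where
  "Wb n = ball (vec (from_nat (fst (prod_decode n)))) (1 / real (Suc (snd (prod_decode n))))"

lemma open_Wb: "open (Wb n)" by (simp add: Wb_def)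

lemma Wb_nonempty: "Wb n \<noteq> {}" by (simp add: Wb_def)

lemma Wb_inside:
  assumes "open U" "y \<in> U"
  shows "\<exists>n\<ge>N. Wb n \<subseteq> U"
proof -
  obtain e where e: "e > 0" "ball y e \<subseteq> U" using assms open_contains_ball by blast
  obtain qs where qs: "dist y (vec qs) < e/2" using vec_dense[of "e/2" y] e by auto
  obtain j where j: "j \<ge> N" "1 / real (Suc j) < e/2"
  proof -
    obtain j0 where "inverse (real (Suc j0)) < e/2" using reals_Archimedean[of "e/2"] e by auto
    then have "1 / real (Suc (max j0 N)) < e/2"
      by (smt (verit, best) divide_inverse_commute divide_right_mono inverse_eq_divide le_eq_less_or_eq max.cobounded1 mult_cancel_right1 of_nat_0_less_iff of_nat_le_iff zero_less_Suc Suc_le_mono frac_le)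
    then show ?thesis using that[of "max j0 N"] by auto
  qed
  define n where "n = prod_encode (to_nat qs, j)"
  have "n \<ge> j" unfolding n_def by (rule le_prod_encode_2)
  moreover have "Wb n = ball (vec qs) (1 / real (Suc j))"
    by (simp add: Wb_def n_def)
  moreover have "ball (vec qs) (1 / real (Suc j)) \<subseteq> ball y e"
  proof
    fix z assume "z \<in> ball (vec qs) (1 / real (Suc j))"
    then have "dist z (vec qs) < e/2" using j by (simp add: dist_commute)
    then show "z \<in> ball y e" using qs dist_triangle[of z y "vec qs"]
      by (simp add: dist_commute)
  qed
  ultimately show ?thesis using j e by (intro exI[of _ n]) auto
qed

definition wt :: "(nat \<Rightarrow> real) \<Rightarrow> bool" where
  "wt w \<longleftrightarrow> (\<forall>i. w i \<in> {1, 2})"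

lemma wt_bounds: "wt w \<Longrightarrow> (w i)\<^sup>2 \<le> 4"
  by (auto simp: wt_def power2_eq_square dest: spec[of _ i])

lemma B_summable:
  assumes "wt w"
  shows "summable (\<lambda>i. (w i * l2_seq x (Suc i))\<^sup>2)"
proof (rule summable_comparison_test')
  show "summable (\<lambda>i. 4 * (l2_seq x (Suc i))\<^sup>2)"
    using l2_summable[of x] summable_Suc_iff[where f="\<lambda>i. (l2_seq x i)\<^sup>2"] by (intro summable_mult) simp
  fix n
  show "norm ((w n * l2_seq x (Suc n))\<^sup>2) \<le> 4 * (l2_seq x (Suc n))\<^sup>2"
    using wt_bounds[OF assms, of n] by (simp add: power_mult_distrib mult_right_mono)
qed

lemma B_seq:
  assumes "wt w"
  shows "l2_seq (B w x) i = w i * l2_seq x (Suc i)"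
  unfolding B_def using Abs_l2_inv[OF B_summable[OF assms]] by simp

lemma B_norm:
  assumes "wt w"
  shows "norm (B w x) \<le> 2 * norm x"
proof -
  have s1: "summable (\<lambda>i. (l2_seq x (Suc i))\<^sup>2)"
    using l2_summable[of x] summable_Suc_iff[where f="\<lambda>i. (l2_seq x i)\<^sup>2"] by simp
  have "(\<Sum>i. (l2_seq (B w x) i)\<^sup>2) \<le> (\<Sum>i. 4 * (l2_seq x (Suc i))\<^sup>2)"
  proof (rule suminf_le)
    show "summable (\<lambda>i. (l2_seq (B w x) i)\<^sup>2)" by (rule l2_summable)
    show "summable (\<lambda>i. 4 * (l2_seq x (Suc i))\<^sup>2)" using s1 by (rule summable_mult)
    fix n show "(l2_seq (B w x) n)\<^sup>2 \<le> 4 * (l2_seq x (Suc n))\<^sup>2"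
      using wt_bounds[OF assms, of n] by (simp add: B_seq[OF assms] power_mult_distrib mult_right_mono)
  qed
  also have "\<dots> = 4 * (\<Sum>i. (l2_seq x (Suc i))\<^sup>2)" using suminf_mult[OF s1] by simp
  also have "\<dots> = 4 * ((\<Sum>i. (l2_seq x i)\<^sup>2) - (l2_seq x 0)\<^sup>2)"
    using suminf_split_head[OF l2_summable[of x]] by simp
  also have "\<dots> \<le> 4 * (\<Sum>i. (l2_seq x i)\<^sup>2)" by simp
  finally have "(norm (B w x))\<^sup>2 \<le> (2 * norm x)\<^sup>2"
    by (simp add: norm_sq_l2 power_mult_distrib)
  then show ?thesis by (rule power2_le_imp_le) simp
qed

lemma B_minus:
  assumes "wt w"
  shows "B w (x - y) = B w x - B w y"
  by (rule l2_eqI) (simp add: B_seq[OF assms] algebra_simps)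

lemma Bk_minus:
  assumes "wt w"
  shows "(B w ^^ k) (x - y) = (B w ^^ k) x - (B w ^^ k) y"
  by (induction k) (simp_all add: B_minus[OF assms])

lemma Bk_norm:
  assumes "wt w"
  shows "norm ((B w ^^ k) x) \<le> 2 ^ k * norm x"
proof (induction k)
  case 0 then show ?case by simp
next
  case (Suc k)
  have "norm ((B w ^^ Suc k) x) \<le> 2 * norm ((B w ^^ k) x)" using B_norm[OF assms] by simp
  also have "\<dots> \<le> 2 * (2 ^ k * norm x)" using Suc by simp
  finally show ?case by simp
qed

lemma Bk_fin_supp:
  assumes "wt w" "wt v" "\<And>i. i \<ge> M \<Longrightarrow> l2_seq u i = 0" "\<And>i. i < M \<Longrightarrow> w i = v i"
  shows "(B w ^^ k) u = (B v ^^ k) u \<and> (\<forall>i\<ge>M. l2_seq ((B w ^^ k) u) i = 0)"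
proof (induction k)
  case 0 then show ?case using assms(3) by simp
next
  case (Suc k)
  let ?z = "(B w ^^ k) u"
  have z: "\<And>i. i \<ge> M \<Longrightarrow> l2_seq ?z i = 0" using Suc by blast
  have "B w ?z = B v ?z"
  proof (rule l2_eqI)
    fix i
    show "l2_seq (B w ?z) i = l2_seq (B v ?z) i"
    proof (cases "i < M")
      case True then show ?thesis by (simp add: B_seq[OF assms(1)] B_seq[OF assms(2)] assms(4))
    next
      case False then show ?thesis by (simp add: B_seq[OF assms(1)] B_seq[OF assms(2)] z)
    qed
  qed
  moreover have "\<forall>i\<ge>M. l2_seq (B w ?z) i = 0" by (simp add: B_seq[OF assms(1)] z)
  ultimately show ?case using Suc by simp
qed

lemma trunc_l2:
  fixes x :: l2
  assumes "e > 0"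
  shows "\<exists>M u. (\<forall>i\<ge>M. l2_seq u i = 0) \<and> norm (x - u) < e"
proof -
  obtain M where M: "norm (x - Abs_l2 (\<lambda>i. if i < M then l2_seq x i else 0)) < e"
    using trunc_approx[OF assms] by auto
  have s: "summable (\<lambda>i. ((\<lambda>i. if i < M then l2_seq x i else 0) i)\<^sup>2)"
    by (rule fin_supp_summable[of M]) auto
  show ?thesis using M Abs_l2_inv[OF s] by (intro exI[of _ M] exI[of _ "Abs_l2 (\<lambda>i. if i < M then l2_seq x i else 0)"]) auto
qed

lemma Bk_joint:
  assumes "wt v" "e > 0"
  shows "\<exists>\<delta>>0. \<exists>M. \<forall>w x. wt w \<and> (\<forall>i<M. w i = v i) \<and> dist x x0 < \<delta> \<longrightarrow> dist ((B w ^^ k) x) ((B v ^^ k) x0) < e"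
proof -
  define \<eta> where "\<eta> = e / (3 * 2 ^ k)"
  have eta: "\<eta> > 0" using assms by (simp add: \<eta>_def)
  obtain M u where u: "\<forall>i\<ge>M. l2_seq u i = 0" "norm (x0 - u) < \<eta>" using trunc_l2[OF eta, of x0] by auto
  show ?thesis
  proof (intro exI conjI allI impI)
    show "\<eta> > 0" by (rule eta)
    fix w x assume H: "wt w \<and> (\<forall>i<M. w i = v i) \<and> dist x x0 < \<eta>"
    then have w: "wt w" by simp
    have equ: "(B w ^^ k) u = (B v ^^ k) u" using Bk_fin_supp[OF w assms(1), of M u k] u H by auto
    have decomp: "(B w ^^ k) x - (B v ^^ k) x0 = (B w ^^ k) (x - x0) + (B w ^^ k) (x0 - u) - (B v ^^ k) (x0 - u)"
      by (simp only: Bk_minus[OF w] Bk_minus[OF assms(1)] equ) (simp add: algebra_simps)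
    have "norm ((B w ^^ k) x - (B v ^^ k) x0) \<le> norm ((B w ^^ k) (x - x0)) + norm ((B w ^^ k) (x0 - u)) + norm ((B v ^^ k) (x0 - u))"
      unfolding decomp using norm_triangle_ineq4[of "(B w ^^ k) (x - x0) + (B w ^^ k) (x0 - u)" "(B v ^^ k) (x0 - u)"]
        norm_triangle_ineq[of "(B w ^^ k) (x - x0)" "(B w ^^ k) (x0 - u)"] by linarith
    also have "\<dots> < 2 ^ k * \<eta> + 2 ^ k * \<eta> + 2 ^ k * \<eta>"
    proof -
      have "norm ((B w ^^ k) (x - x0)) \<le> 2 ^ k * norm (x - x0)" by (rule Bk_norm[OF w])
      also have "\<dots> < 2 ^ k * \<eta>" using H by (simp add: dist_norm)
      finally have 1: "norm ((B w ^^ k) (x - x0)) < 2 ^ k * \<eta>" .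
      have "norm ((B w ^^ k) (x0 - u)) \<le> 2 ^ k * norm (x0 - u)" by (rule Bk_norm[OF w])
      also have "\<dots> \<le> 2 ^ k * \<eta>" using u by simp
      finally have 2: "norm ((B w ^^ k) (x0 - u)) \<le> 2 ^ k * \<eta>" .
      have "norm ((B v ^^ k) (x0 - u)) \<le> 2 ^ k * norm (x0 - u)" by (rule Bk_norm[OF assms(1)])
      also have "\<dots> \<le> 2 ^ k * \<eta>" using u by simp
      finally have 3: "norm ((B v ^^ k) (x0 - u)) \<le> 2 ^ k * \<eta>" .
      show ?thesis using 1 2 3 by linarith
    qed
    also have "\<dots> = e" by (simp add: \<eta>_def)
    finally show "dist ((B w ^^ k) x) ((B v ^^ k) x0) < e" by (simp add: dist_norm)
  qed
qed

lemma f_locally_agree: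
  fixes f :: "l2 \<Rightarrow> nat \<Rightarrow> real"
  assumes cont: "continuous_on G f" and wts: "\<And>y. y \<in> G \<Longrightarrow> wt (f y)" and y0: "y0 \<in> G"
  shows "\<exists>\<delta>>0. \<forall>y\<in>G. dist y y0 < \<delta> \<longrightarrow> (\<forall>i<M. f y i = f y0 i)"
proof (induction M)
  case 0 then show ?case by (auto intro: exI[of _ 1])
next
  case (Suc M)
  then obtain \<delta> where d: "\<delta> > 0" "\<forall>y\<in>G. dist y y0 < \<delta> \<longrightarrow> (\<forall>i<M. f y i = f y0 i)" by auto
  have "continuous_on G (\<lambda>y. f y M)" by (rule continuous_on_product_then_coordinatewise[OF cont])
  then obtain d2 where d2: "d2 > 0" "\<forall>y\<in>G. dist y y0 < d2 \<longrightarrow> dist (f y M) (f y0 M) < 1/2"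
    using y0 unfolding continuous_on_iff by (metis half_gt_zero_iff zero_less_one)
  show ?case
  proof (intro exI[of _ "min \<delta> d2"] conjI ballI impI allI)
    show "min \<delta> d2 > 0" using d d2 by simp
    fix y i assume y: "y \<in> G" "dist y y0 < min \<delta> d2" and i: "i < Suc M"
    show "f y i = f y0 i"
    proof (cases "i < M")
      case True then show ?thesis using d y by auto
    next
      case False
      then have "i = M" using i by simp
      have "dist (f y M) (f y0 M) < 1/2" using d2 y by auto
      moreover have "f y M \<in> {1,2}" "f y0 M \<in> {1,2}" using wts[OF y(1)] wts[OF y0] by (auto simp: wt_def)
      ultimately show ?thesis using \<open>i = M\<close> by (auto simp: dist_real_def)
    qed
  qed
qed

lemma closure_cofinite:
  fixes F :: "l2 set"
  assumes "finite F"
  shows "closure (- F) = UNIV"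
proof -
  have "x islimpt (- F)" for x
  proof -
    have "- F \<union> F = UNIV" by blast
    then have "x islimpt (- F \<union> F)" using islimpt_UNIV[of x] by simp
    then show ?thesis using islimpt_finite[OF assms] islimpt_Un by blast
  qed
  then show ?thesis by (auto simp: closure_def)
qed

lemma dense_meets:
  assumes "closure S = UNIV" "open U" "U \<noteq> {}"
  shows "U \<inter> S \<noteq> {}"
  using open_Int_closure_eq_empty[OF assms(2), of S] assms by auto

lemma HC_shift:
  assumes "h \<in> HC w"
  shows "(B w ^^ k) h \<in> HC w"
proof -
  let ?R = "range (\<lambda>j. (B w ^^ j) ((B w ^^ k) h))"
  let ?F = "(\<lambda>j. (B w ^^ j) h) ` {..<k}"
  have sub: "range (\<lambda>j. (B w ^^ j) h) \<subseteq> ?F \<union> ?R"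
  proof
    fix y assume "y \<in> range (\<lambda>j. (B w ^^ j) h)"
    then obtain j where j: "y = (B w ^^ j) h" by auto
    show "y \<in> ?F \<union> ?R"
    proof (cases "j < k")
      case True then show ?thesis using j by auto
    next
      case False
      have "(B w ^^ (j - k + k)) h = (B w ^^ (j - k)) ((B w ^^ k) h)" by (simp add: funpow_add)
      moreover have "j - k + k = j" using False by simp
      ultimately have "y = (B w ^^ (j - k)) ((B w ^^ k) h)" using j by simp
      then show ?thesis by auto
    qed
  qed
  have c: "closure (range (\<lambda>j. (B w ^^ j) h)) = UNIV" using assms by (simp add: HC_def)
  have "UNIV \<subseteq> closure (?F \<union> ?R)"
    using closure_mono[OF sub] c by simp
  also have "\<dots> = ?F \<union> closure ?R"
    unfolding closure_Un using closure_closed[OF finite_imp_closed[of ?F]] by simp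
  finally have "- ?F \<subseteq> closure ?R" by blast
  then have "closure (- ?F) \<subseteq> closure ?R" by (metis closure_minimal closed_closure)
  then show ?thesis using closure_cofinite[of ?F] unfolding HC_def by auto
qed

lemma HC_dense:
  assumes "HC w \<noteq> {}" "open U" "U \<noteq> {}"
  shows "\<exists>x\<in>U. x \<in> HC w"
proof -
  obtain h where h: "h \<in> HC w" using assms by auto
  then have c: "closure (range (\<lambda>j. (B w ^^ j) h)) = UNIV" by (simp add: HC_def)
  have "U \<inter> range (\<lambda>j. (B w ^^ j) h) \<noteq> {}"
    by (rule dense_meets[OF c assms(2,3)])
  then obtain k where "(B w ^^ k) h \<in> U" by auto
  then show ?thesis using HC_shift[OF h, of k] by auto
qed

lemma HC_of_hits:
  assumes "\<forall>n\<ge>N0. \<exists>k. (B w ^^ k) x \<in> Wb n"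
  shows "x \<in> HC w"
proof -
  define S where "S = range (\<lambda>k. (B w ^^ k) x)"
  have "y \<in> closure S" for y
  proof (rule ccontr)
    assume "y \<notin> closure S"
    then have y: "y \<in> - closure S" by simp
    have o: "open (- closure S)" by (rule open_Compl[OF closed_closure])
    obtain n where n: "n \<ge> N0" "Wb n \<subseteq> - closure S"
      using Wb_inside[OF o y, of N0] by (elim exE conjE) simp
    then obtain k where k: "(B w ^^ k) x \<in> Wb n" using assms by auto
    have "(B w ^^ k) x \<in> S" unfolding S_def by simp
    then have "(B w ^^ k) x \<in> closure S" using closure_subset[of S] by (rule subsetD[rotated])
    then show False using n k by (meson Compl_iff subsetD)
  qed
  then have "closure S = UNIV" by auto
  then show ?thesis unfolding HC_def S_def by simp
qed

definition good :: "l2 set \<Rightarrow> (l2 \<Rightarrow> nat \<Rightarrow> real) \<Rightarrow> nat \<Rightarrow> l2 set \<Rightarrow> l2 set \<Rightarrow> bool" where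
  "good G f n A C \<longleftrightarrow> (\<forall>x\<in>A. \<forall>y\<in>C. y \<in> G \<longrightarrow> (\<exists>k. (B (f y) ^^ k) x \<in> Wb n))"

lemma good_mono: "good G f n A C \<Longrightarrow> A' \<subseteq> A \<Longrightarrow> C' \<subseteq> C \<Longrightarrow> good G f n A' C'"
  unfolding good_def by blast

lemma Ofam:
  assumes "gdelta_in euclidean G"
  shows "\<exists>Op::nat \<Rightarrow> l2 set. (\<forall>n. open (Op n)) \<and> (\<forall>n. G \<subseteq> Op n) \<and> (\<forall>x. (\<forall>n. x \<in> Op n) \<longrightarrow> x \<in> G)"
proof -
  have ex: "\<exists>T. countable T \<and> T \<subseteq> Collect (openin euclidean) \<and> \<Inter>T = G"
    using assms unfolding gdelta_in_alt intersection_of_def by simp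
  then obtain T where T: "countable T" "T \<subseteq> Collect (openin euclidean)" "\<Inter>T = G"
    by (elim exE conjE)
  show ?thesis
  proof (cases "T = {}")
    case True
    then show ?thesis using T by (intro exI[of _ "\<lambda>_. UNIV"]) auto
  next
    case False
    have r: "range (from_nat_into T) = T" using range_from_nat_into[OF False T(1)] .
    define Op where "Op = from_nat_into T"
    have inT: "Op n \<in> T" for n
    proof -
      have "Op n \<in> range (from_nat_into T)" unfolding Op_def by simp
      then show ?thesis unfolding r .
    qed
    have 1: "\<forall>n. open (Op n)"
    proof
      fix n show "open (Op n)" using subsetD[OF T(2) inT[of n]] by simp
    qed
    have 2: "\<forall>n. G \<subseteq> Op n"
    proof
      fix n show "G \<subseteq> Op n" using Inter_lower[OF inT[of n]] T(3) by simp
    qed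
    have 3: "\<forall>x. (\<forall>n. x \<in> Op n) \<longrightarrow> x \<in> G"
    proof (intro allI impI)
      fix x assume "\<forall>n. x \<in> Op n"
      have "x \<in> t" if "t \<in> T" for t
      proof -
        have "t \<in> range (from_nat_into T)" using that r by simp
        then obtain n where "t = Op n" unfolding Op_def by auto
        then show ?thesis using \<open>\<forall>n. x \<in> Op n\<close> by simp
      qed
      then have "x \<in> \<Inter>T" by blast
      then show "x \<in> G" using T(3) by simp
    qed
    show ?thesis using 1 2 3 by blast
  qed
qed

lemma pair_lemma:
  fixes G :: "l2 set" and f :: "l2 \<Rightarrow> nat \<Rightarrow> real"
  assumes cont: "continuous_on G f" and wts: "\<And>y. y \<in> G \<Longrightarrow> wt (f y)"
    and hc: "\<And>y. y \<in> G \<Longrightarrow> HC (f y) \<noteq> {}" and dense: "closure G = UNIV"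
    and r1: "r1 > 0" and r2: "r2 > 0"
  shows "\<exists>a1 \<rho>1 a2 \<rho>2. \<rho>1 > 0 \<and> \<rho>2 > 0 \<and> \<rho>1 \<le> r1 \<and> \<rho>2 \<le> r2 \<and> cball a1 \<rho>1 \<subseteq> cball c1 r1 \<and> cball a2 \<rho>2 \<subseteq> cball c2 r2
           \<and> good G f n (cball a1 \<rho>1) (cball a2 \<rho>2)"
proof -
  have "ball c2 r2 \<inter> G \<noteq> {}" using dense_meets[OF dense, of "ball c2 r2"] r2 by auto
  then obtain y0 where y0: "y0 \<in> G" "dist c2 y0 < r2" by auto
  obtain x0 where x0: "x0 \<in> ball c1 r1" "x0 \<in> HC (f y0)"
    using HC_dense[OF hc[OF y0(1)], of "ball c1 r1"] r1 by auto
  have c: "closure (range (\<lambda>k. (B (f y0) ^^ k) x0)) = UNIV" using x0(2) by (simp add: HC_def)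
  have "Wb n \<inter> range (\<lambda>k. (B (f y0) ^^ k) x0) \<noteq> {}"
    by (rule dense_meets[OF c open_Wb Wb_nonempty])
  then obtain k where k: "(B (f y0) ^^ k) x0 \<in> Wb n" by auto
  obtain \<epsilon> where eps: "\<epsilon> > 0" "ball ((B (f y0) ^^ k) x0) \<epsilon> \<subseteq> Wb n"
    using open_contains_ball k open_Wb by blast
  obtain \<delta> M where dM: "\<delta> > 0" "\<forall>w x. wt w \<and> (\<forall>i<M. w i = f y0 i) \<and> dist x x0 < \<delta> \<longrightarrow> dist ((B w ^^ k) x) ((B (f y0) ^^ k) x0) < \<epsilon>"
    using Bk_joint[OF wts[OF y0(1)] eps(1), of x0 k] by auto
  obtain \<delta>2 where d2: "\<delta>2 > 0" "\<forall>y\<in>G. dist y y0 < \<delta>2 \<longrightarrow> (\<forall>i<M. f y i = f y0 i)"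
    using f_locally_agree[OF cont wts y0(1), of M] by auto
  define \<rho> where "\<rho> = min (min (\<delta>/2) (\<delta>2/2)) (min ((r1 - dist c1 x0)/2) ((r2 - dist c2 y0)/2))"
  have h1: "dist c1 x0 < r1" using x0(1) by simp
  have rho: "\<rho> > 0" unfolding \<rho>_def using dM(1) d2(1) h1 y0(2) by simp
  show ?thesis
  proof (intro exI conjI)
    show "\<rho> > 0" by (rule rho)
    show "\<rho> > 0" by (rule rho)
    have "\<rho> \<le> (r1 - dist c1 x0)/2" unfolding \<rho>_def by (rule min.coboundedI2[OF min.cobounded1])
    then have "dist c1 x0 + 2 * \<rho> \<le> r1" by (simp add: field_simps)
    then show "\<rho> \<le> r1" using zero_le_dist[of c1 x0] rho by linarith
    have "\<rho> \<le> (r2 - dist c2 y0)/2" unfolding \<rho>_def by (rule min.coboundedI2[OF min.cobounded2])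
    then have "dist c2 y0 + 2 * \<rho> \<le> r2" by (simp add: field_simps)
    then show "\<rho> \<le> r2" using zero_le_dist[of c2 y0] rho by linarith
    show "cball x0 \<rho> \<subseteq> cball c1 r1"
    proof
      fix z assume "z \<in> cball x0 \<rho>"
      then have "dist x0 z \<le> \<rho>" by simp
      moreover have "\<rho> \<le> (r1 - dist c1 x0)/2" unfolding \<rho>_def by (rule min.coboundedI2[OF min.cobounded1])
      ultimately show "z \<in> cball c1 r1" using dist_triangle[of c1 z x0] x0 by simp
    qed
    show "cball y0 \<rho> \<subseteq> cball c2 r2"
    proof
      fix z assume "z \<in> cball y0 \<rho>"
      then have "dist y0 z \<le> \<rho>" by simp
      moreover have "\<rho> \<le> (r2 - dist c2 y0)/2" unfolding \<rho>_def by (rule min.coboundedI2[OF min.cobounded2])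
      ultimately show "z \<in> cball c2 r2" using dist_triangle[of c2 z y0] y0 by simp
    qed
    show "good G f n (cball x0 \<rho>) (cball y0 \<rho>)"
      unfolding good_def
    proof (intro ballI impI exI)
      fix x y assume x: "x \<in> cball x0 \<rho>" and y: "y \<in> cball y0 \<rho>" "y \<in> G"
      have "\<rho> \<le> \<delta>/2" "\<rho> \<le> \<delta>2/2" unfolding \<rho>_def
        by (rule min.coboundedI1[OF min.cobounded1], rule min.coboundedI1[OF min.cobounded2])
      then have "dist x x0 < \<delta>" "dist y y0 < \<delta>2" using x y dM d2 by (simp_all add: dist_commute)
      then have agree: "\<forall>i<M. f y i = f y0 i" "dist x x0 < \<delta>" using d2(2) y(2) by auto
      have "dist ((B (f y) ^^ k) x) ((B (f y0) ^^ k) x0) < \<epsilon>"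
        using dM(2)[rule_format, of "f y" x] agree wts[OF y(2)] by blast
      then show "(B (f y) ^^ k) x \<in> Wb n" using eps(2) by (auto simp: dist_commute)
    qed
  qed
qed

lemma refine_lemma:
  fixes G :: "l2 set" and f :: "l2 \<Rightarrow> nat \<Rightarrow> real"
  assumes cont: "continuous_on G f" and wts: "\<And>y. y \<in> G \<Longrightarrow> wt (f y)"
    and hc: "\<And>y. y \<in> G \<Longrightarrow> HC (f y) \<noteq> {}" and dense: "closure G = UNIV"
    and Q: "finite Q" "\<And>i j. (i, j) \<in> Q \<Longrightarrow> i \<noteq> j"
    and rpos: "\<And>i. r i > 0"
  shows "\<exists>c' r'. (\<forall>i. r' i > 0 \<and> r' i \<le> r i \<and> cball (c' i) (r' i) \<subseteq> cball (c i) (r i))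
           \<and> (\<forall>(i,j)\<in>Q. good G f n (cball (c' i) (r' i)) (cball (c' j) (r' j)))"
  using Q
proof (induction Q rule: finite_induct)
  case empty
  then show ?case using rpos by (intro exI[of _ c] exI[of _ r]) auto
next
  case (insert p Q)
  obtain i j where p: "p = (i, j)" by (cases p)
  have ij: "i \<noteq> j" using insert.prems p by auto
  obtain c' r' where IH: "\<forall>i. r' i > 0 \<and> r' i \<le> r i \<and> cball (c' i) (r' i) \<subseteq> cball (c i) (r i)"
    "\<forall>(i,j)\<in>Q. good G f n (cball (c' i) (r' i)) (cball (c' j) (r' j))"
    using insert.IH insert.prems by auto
  obtain a1 \<rho>1 a2 \<rho>2 where pr: "\<rho>1 > 0" "\<rho>2 > 0" "\<rho>1 \<le> r' i" "\<rho>2 \<le> r' j"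
    "cball a1 \<rho>1 \<subseteq> cball (c' i) (r' i)" "cball a2 \<rho>2 \<subseteq> cball (c' j) (r' j)"
    "good G f n (cball a1 \<rho>1) (cball a2 \<rho>2)"
    using pair_lemma[OF cont wts hc dense, of "r' i" "r' j" "c' i" "c' j" n] IH(1) by blast
  define c'' where "c'' = c'(i := a1, j := a2)"
  define r'' where "r'' = r'(i := \<rho>1, j := \<rho>2)"
  have sub: "cball (c'' l) (r'' l) \<subseteq> cball (c' l) (r' l)" for l
    using pr ij by (auto simp: c''_def r''_def)
  show ?case
  proof (intro exI[of _ c''] exI[of _ r''] conjI allI ballI)
    fix l
    show "r'' l > 0" using pr IH(1) ij by (auto simp: r''_def)
    have "r'' l \<le> r' l" using pr by (auto simp: r''_def)
    then show "r'' l \<le> r l" using IH(1) order_trans by blast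
    show "cball (c'' l) (r'' l) \<subseteq> cball (c l) (r l)" using sub IH(1) by blast
  next
    fix q assume "q \<in> insert p Q"
    then show "case q of (i, j) \<Rightarrow> good G f n (cball (c'' i) (r'' i)) (cball (c'' j) (r'' j))"
    proof
      assume "q = p"
      then show ?thesis using p pr(7) ij by (simp add: c''_def r''_def)
    next
      assume "q \<in> Q"
      then obtain a b where q: "q = (a, b)" "(a, b) \<in> Q" by (cases q) auto
      then have "good G f n (cball (c' a) (r' a)) (cball (c' b) (r' b))" using IH(2) by auto
      then have "good G f n (cball (c'' a) (r'' a)) (cball (c'' b) (r'' b))"
        using good_mono sub by blast
      then show ?thesis using q by simp
    qed
  qed
qed

lemma split_lemma:
  fixes U :: "l2 set"
  assumes "open U" "U \<noteq> {}" "\<eta> > 0"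
  shows "\<exists>a a' \<rho>. \<rho> > 0 \<and> \<rho> \<le> \<eta> \<and> cball a \<rho> \<subseteq> U \<and> cball a' \<rho> \<subseteq> U \<and> cball a \<rho> \<inter> cball a' \<rho> = {}"
proof -
  obtain a where a: "a \<in> U" using assms by auto
  obtain \<epsilon> where e: "\<epsilon> > 0" "ball a \<epsilon> \<subseteq> U" using assms(1) a by (auto simp: open_contains_ball)
  define a' where "a' = a + (\<epsilon>/2) *\<^sub>R e0"
  have daa: "dist a a' = \<epsilon>/2" using e by (simp add: a'_def dist_norm norm_e0)
  define \<rho> where "\<rho> = min (\<epsilon>/8) \<eta>"
  have rho: "\<rho> > 0" "\<rho> \<le> \<epsilon>/8" "\<rho> \<le> \<eta>" using e assms by (auto simp: \<rho>_def)
  have 1: "cball a \<rho> \<subseteq> U"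
  proof
    fix z assume "z \<in> cball a \<rho>"
    then have "dist a z < \<epsilon>" using rho e by simp
    then show "z \<in> U" using e by auto
  qed
  have 2: "cball a' \<rho> \<subseteq> U"
  proof
    fix z assume "z \<in> cball a' \<rho>"
    then have "dist a' z \<le> \<rho>" by simp
    then have "dist a z < \<epsilon>" using dist_triangle[of a z a'] daa rho e by linarith
    then show "z \<in> U" using e by auto
  qed
  have 3: "cball a \<rho> \<inter> cball a' \<rho> = {}"
  proof (rule ccontr)
    assume "cball a \<rho> \<inter> cball a' \<rho> \<noteq> {}"
    then obtain z where z: "dist a z \<le> \<rho>" "dist a' z \<le> \<rho>" by auto
    have "dist a a' \<le> dist a z + dist a' z" using dist_triangle[of a a' z] dist_commute[of z a'] by linarith
    then show False using z daa rho e by linarith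
  qed
  show ?thesis
    apply (rule exI[of _ a], rule exI[of _ a'], rule exI[of _ \<rho>])
    using rho 1 2 3 by simp
qed

definition cb :: "(bool list \<Rightarrow> l2 \<times> real) \<Rightarrow> bool list \<Rightarrow> l2 set" where
  "cb F s = cball (fst (F s)) (snd (F s))"

definition Inv :: "l2 set \<Rightarrow> (l2 \<Rightarrow> nat \<Rightarrow> real) \<Rightarrow> (nat \<Rightarrow> l2 set) \<Rightarrow> nat \<Rightarrow> (bool list \<Rightarrow> l2 \<times> real) \<Rightarrow> bool" where
  "Inv G f Op n F \<longleftrightarrow> (\<forall>s. length s = n \<longrightarrow> snd (F s) > 0 \<and> snd (F s) \<le> (1/2)^n \<and> cb F s \<subseteq> Op n
      \<and> (\<forall>t. length t = n \<and> s \<noteq> t \<longrightarrow> good G f n (cb F s) (cb F t)))"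

definition Qrel :: "nat \<Rightarrow> (bool list \<Rightarrow> l2 \<times> real) \<Rightarrow> (bool list \<Rightarrow> l2 \<times> real) \<Rightarrow> bool" where
  "Qrel n F F' \<longleftrightarrow> (\<forall>s. length s = n \<longrightarrow> (\<forall>b. cb F' (s @ [b]) \<subseteq> cb F s) \<and> cb F' (s @ [True]) \<inter> cb F' (s @ [False]) = {})"

lemma finite_len: "finite {s :: bool list. length s = n}"
  using finite_lists_length_eq[of "UNIV :: bool set" n] by simp

lemma step_lemma:
  fixes G :: "l2 set" and f :: "l2 \<Rightarrow> nat \<Rightarrow> real"
  assumes cont: "continuous_on G f" and wts: "\<And>y. y \<in> G \<Longrightarrow> wt (f y)"
    and hc: "\<And>y. y \<in> G \<Longrightarrow> HC (f y) \<noteq> {}" and dense: "closure G = UNIV"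
    and Op: "\<And>m. open (Op m)" "\<And>m. G \<subseteq> Op m"
    and inv: "Inv G f Op n F"
  shows "\<exists>F'. Inv G f Op (Suc n) F' \<and> Qrel n F F'"
proof -
  define U where "U s = ball (fst (F s)) (snd (F s)) \<inter> Op (Suc n)" for s
  have "\<forall>s. \<exists>a a' \<rho>. length s = n \<longrightarrow> (\<rho> > 0 \<and> \<rho> \<le> (1/2)^(Suc n) \<and> cball a \<rho> \<subseteq> U s \<and> cball a' \<rho> \<subseteq> U s \<and> cball a \<rho> \<inter> cball a' \<rho> = {})"
  proof
    fix s
    show "\<exists>a a' \<rho>. length s = n \<longrightarrow> (\<rho> > 0 \<and> \<rho> \<le> (1/2)^(Suc n) \<and> cball a \<rho> \<subseteq> U s \<and> cball a' \<rho> \<subseteq> U s \<and> cball a \<rho> \<inter> cball a' \<rho> = {})"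
    proof (cases "length s = n")
      case True
      then have r: "snd (F s) > 0" using inv by (simp add: Inv_def)
      have "ball (fst (F s)) (snd (F s)) \<inter> G \<noteq> {}"
        using dense_meets[OF dense, of "ball (fst (F s)) (snd (F s))"] r by simp
      then have ne: "U s \<noteq> {}" using Op(2)[of "Suc n"] by (auto simp: U_def)
      have op: "open (U s)" using Op(1) by (simp add: U_def open_Int)
      show ?thesis using split_lemma[OF op ne, of "(1/2)^(Suc n)"] by auto
    next
      case False then show ?thesis by simp
    qed
  qed
  then obtain A A' R where AR: "\<And>s. length s = n \<Longrightarrow> R s > 0 \<and> R s \<le> (1/2)^(Suc n) \<and> cball (A s) (R s) \<subseteq> U s
      \<and> cball (A' s) (R s) \<subseteq> U s \<and> cball (A s) (R s) \<inter> cball (A' s) (R s) = {}"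
    by metis
  define c0 where "c0 t = (if last t then A (butlast t) else A' (butlast t))" for t
  define r0 where "r0 t = (if length t = Suc n then R (butlast t) else 1)" for t
  have r0pos: "r0 t > 0" for t using AR[of "butlast t"] by (simp add: r0_def)
  define QQ where "QQ = {(s, t). s \<in> {s :: bool list. length s = Suc n} \<and> t \<in> {s :: bool list. length s = Suc n} \<and> s \<noteq> t}"
  have finQ: "finite QQ"
  proof -
    have "QQ \<subseteq> {s :: bool list. length s = Suc n} \<times> {s :: bool list. length s = Suc n}" by (auto simp: QQ_def)
    then show ?thesis using finite_len by (meson finite_SigmaI finite_subset)
  qed
  have Qne: "\<And>i j. (i, j) \<in> QQ \<Longrightarrow> i \<noteq> j" by (auto simp: QQ_def)
  obtain c' r' where cr: "\<forall>i. r' i > 0 \<and> r' i \<le> r0 i \<and> cball (c' i) (r' i) \<subseteq> cball (c0 i) (r0 i)"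
    "\<forall>(i,j)\<in>QQ. good G f (Suc n) (cball (c' i) (r' i)) (cball (c' j) (r' j))"
    using refine_lemma[where n="Suc n" and c=c0 and r=r0 and Q=QQ and G=G and f=f, OF cont wts hc dense finQ Qne r0pos] by blast
  define F' where "F' t = (c' t, r' t)" for t
  have cbF': "cb F' t = cball (c' t) (r' t)" for t by (simp add: cb_def F'_def)
  have sub0: "cb F' (s @ [b]) \<subseteq> cball (if b then A s else A' s) (R s)" if "length s = n" for s b
    using cr(1)[rule_format, of "s @ [b]"] that by (cases b) (simp_all add: cbF' c0_def r0_def)
  have Us: "U s \<subseteq> cb F s" for s by (auto simp: U_def cb_def)
  have UOp: "U s \<subseteq> Op (Suc n)" for s by (auto simp: U_def)
  have "Inv G f Op (Suc n) F'"
    unfolding Inv_def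
  proof (intro allI impI)
    fix t :: "bool list" assume t: "length t = Suc n"
    then obtain s b where sb: "t = s @ [b]" "length s = n"
      by (metis append_butlast_last_id length_butlast diff_Suc_1 length_0_conv nat.simps(3))
    have 1: "snd (F' t) > 0" using cr(1) by (simp add: F'_def)
    have "r' t \<le> r0 t" using cr(1) by simp
    also have "r0 t = R s" using t sb by (simp add: r0_def)
    also have "\<dots> \<le> (1/2)^(Suc n)" using AR[OF sb(2)] by simp
    finally have 2: "snd (F' t) \<le> (1/2)^(Suc n)" by (simp add: F'_def)
    have "cb F' t \<subseteq> cball (if b then A s else A' s) (R s)" using sub0[OF sb(2)] sb by simp
    also have "\<dots> \<subseteq> U s" using AR[OF sb(2)] by auto
    also have "\<dots> \<subseteq> Op (Suc n)" by (rule UOp)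
    finally have 3: "cb F' t \<subseteq> Op (Suc n)" .
    have 4: "\<forall>u. length u = Suc n \<and> t \<noteq> u \<longrightarrow> good G f (Suc n) (cb F' t) (cb F' u)"
      using cr(2) t by (auto simp: QQ_def cbF')
    show "snd (F' t) > 0 \<and> snd (F' t) \<le> (1/2)^(Suc n) \<and> cb F' t \<subseteq> Op (Suc n)
      \<and> (\<forall>u. length u = Suc n \<and> t \<noteq> u \<longrightarrow> good G f (Suc n) (cb F' t) (cb F' u))"
      using 1 2 3 4 by blast
  qed
  moreover have "Qrel n F F'"
    unfolding Qrel_def
  proof (intro allI impI conjI)
    fix s :: "bool list" and b assume s: "length s = n"
    have "cb F' (s @ [b]) \<subseteq> cball (if b then A s else A' s) (R s)" by (rule sub0[OF s])
    also have "\<dots> \<subseteq> U s" using AR[OF s] by auto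
    also have "\<dots> \<subseteq> cb F s" by (rule Us)
    finally show "cb F' (s @ [b]) \<subseteq> cb F s" .
  next
    fix s :: "bool list" assume s: "length s = n"
    have "cb F' (s @ [True]) \<subseteq> cball (A s) (R s)" using sub0[OF s, of True] by simp
    moreover have "cb F' (s @ [False]) \<subseteq> cball (A' s) (R s)" using sub0[OF s, of False] by simp
    ultimately show "cb F' (s @ [True]) \<inter> cb F' (s @ [False]) = {}" using AR[OF s] by blast
  qed
  ultimately show ?thesis by blast
qed

lemma init_lemma:
  fixes G :: "l2 set" and f :: "l2 \<Rightarrow> nat \<Rightarrow> real"
  assumes dense: "closure G = UNIV"
    and Op: "\<And>m. open (Op m)" "\<And>m. G \<subseteq> Op m"
  shows "\<exists>F. Inv G f Op 0 F"
proof -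
  have "G \<noteq> {}" using dense by auto
  then have ne: "Op 0 \<noteq> {}" using Op(2)[of 0] by auto
  obtain a a' \<rho> where a: "\<rho> > 0" "\<rho> \<le> 1" "cball a \<rho> \<subseteq> Op 0"
    using split_lemma[OF Op(1) ne, of 1] by auto
  have "Inv G f Op 0 (\<lambda>_. (a, \<rho>))"
    unfolding Inv_def cb_def using a by auto
  then show ?thesis by blast
qed

lemma pow_half_small: "e > 0 \<Longrightarrow> \<exists>n. 2 * (1/2::real)^n < e"
proof -
  assume e: "e > 0"
  obtain n where "(1/2::real)^n < e/2" using real_arch_pow_inv[of "e/2" "1/2::real"] e by auto
  then have "2 * (1/2::real)^n < e" by simp
  then show ?thesis by blast
qed

lemma pow_half_mono: "m \<le> n \<Longrightarrow> (1/2::real)^n \<le> (1/2)^m"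
  by (rule power_decreasing) auto

theorem lemma6:
  fixes G :: "l2 set" and f :: "l2 \<Rightarrow> (nat \<Rightarrow> real)"
  assumes "gdelta_in euclidean G"
    and "closure G = UNIV"
    and "f ` G \<subseteq> {w. \<forall>i. w i \<in> {1, 2}}"
    and "continuous_on G f"
    and "\<And>y. y \<in> G \<Longrightarrow> y \<notin> HC (f y)"
    and "\<And>y. y \<in> G \<Longrightarrow> HC (f y) \<noteq> {}"
    and "\<And>U. open U \<Longrightarrow> U \<noteq> {} \<Longrightarrow> \<exists>a b. a \<in> f ` (U \<inter> G) \<and> b \<in> f ` (U \<inter> G) \<and> a \<noteq> b"
  shows "\<exists>P. P \<noteq> {} \<and> perfect_set P \<and> P \<subseteq> G
           \<and> (\<forall>x\<in>P. x \<notin> HC (f x))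
           \<and> (\<forall>x\<in>P. \<forall>y\<in>P. x \<noteq> y \<longrightarrow> x \<in> HC (f y))"
proof -
  note dense = assms(2) and cont = assms(4) and hc = assms(6)
  have wts: "wt (f y)" if "y \<in> G" for y using assms(3) that by (auto simp: wt_def)
  obtain Op :: "nat \<Rightarrow> l2 set" where Op: "\<And>n. open (Op n)" "\<And>n. G \<subseteq> Op n" "\<And>x. (\<forall>n. x \<in> Op n) \<Longrightarrow> x \<in> G"
    using Ofam[OF assms(1)] by blast
  obtain Fs where Fs: "\<And>n. Inv G f Op n (Fs n)" "\<And>n. Qrel n (Fs n) (Fs (Suc n))"
  proof -
    have "\<exists>Fs. \<forall>n. Inv G f Op n (Fs n) \<and> Qrel n (Fs n) (Fs (Suc n))"
    proof (rule dependent_nat_choice)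
      show "\<exists>F. Inv G f Op 0 F" by (rule init_lemma[OF dense Op(1,2)])
      fix F n assume inv: "Inv G f Op n F"
      show "\<exists>F'. Inv G f Op (Suc n) F' \<and> Qrel n F F'"
        by (rule step_lemma[where G=G and f=f and Op=Op and n=n and F=F, OF cont wts hc dense Op(1) Op(2) inv])
    qed
    then show ?thesis using that by blast
  qed
  define C where "C s = cb (Fs (length s)) s" for s
  define R where "R s = snd (Fs (length s) s)" for s
  define ctr where "ctr s = fst (Fs (length s) s)" for s
  have Cdef: "C s = cball (ctr s) (R s)" for s by (simp add: C_def cb_def ctr_def R_def)
  have P1: "R s > 0" "R s \<le> (1/2)^(length s)" "C s \<subseteq> Op (length s)" for s
    using Fs(1)[of "length s"] by (auto simp: Inv_def C_def R_def)
  have P2: "C (s @ [b]) \<subseteq> C s" "C (s @ [True]) \<inter> C (s @ [False]) = {}" for s b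
    using Fs(2)[of "length s"] by (auto simp: Qrel_def C_def)
  have P3: "good G f (length s) (C s) (C t)" if "length s = length t" "s \<noteq> t" for s t
    using Fs(1)[of "length s"] that by (auto simp: Inv_def C_def)
  have diam: "dist x y \<le> 2 * (1/2)^(length s)" if "x \<in> C s" "y \<in> C s" for x y s
  proof -
    have "dist x y \<le> dist (ctr s) x + dist (ctr s) y" by (rule dist_triangle3)
    also have "\<dots> \<le> R s + R s" using that by (simp add: Cdef add_mono)
    also have "\<dots> \<le> 2 * (1/2)^(length s)" using P1(2)[of s] by simp
    finally show ?thesis .
  qed
  define pre where "pre \<sigma> n = map \<sigma> [0..<n]" for \<sigma> :: "nat \<Rightarrow> bool" and n
  have pre_Suc: "pre \<sigma> (Suc n) = pre \<sigma> n @ [\<sigma> n]" for \<sigma> n by (simp add: pre_def)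
  have pre_len: "length (pre \<sigma> n) = n" for \<sigma> n by (simp add: pre_def)
  have P4: "C (pre \<sigma> n) \<subseteq> C (pre \<sigma> m)" if "m \<le> n" for \<sigma> m n
    using that
  proof (induction n rule: dec_induct)
    case base then show ?case by simp
  next
    case (step k)
    then show ?case using P2(1)[of "pre \<sigma> k" "\<sigma> k"] by (simp add: pre_Suc)
  qed
  have P5: "\<exists>a. \<forall>n. a \<in> C (pre \<sigma> n)" for \<sigma>
  proof -
    have h1: "closed (C (pre \<sigma> n))" for n by (simp add: Cdef)
    have h2: "C (pre \<sigma> n) \<noteq> {}" for n using P1(1)[of "pre \<sigma> n"] by (simp add: Cdef)
    have h3: "C (pre \<sigma> n) \<subseteq> C (pre \<sigma> m)" if "m \<le> n" for m n using P4 that by blast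
    have h4: "\<exists>n. \<forall>x\<in>C (pre \<sigma> n). \<forall>y\<in>C (pre \<sigma> n). dist x y < e" if epos: "e > 0" for e
    proof -
      obtain n where n: "2 * (1/2::real)^n < e" using pow_half_small[OF epos] by auto
      show ?thesis using diam[of _ "pre \<sigma> n"] n pre_len[of \<sigma> n]
        by (intro exI[of _ n]) fastforce
    qed
    obtain a where "\<And>n. a \<in> C (pre \<sigma> n)"
      using decreasing_closed_nest[of "\<lambda>n. C (pre \<sigma> n)", OF h1 h2 h3 h4] by blast
    then show ?thesis by blast
  qed
  define P where "P = {x. \<forall>n. \<exists>s. length s = n \<and> x \<in> C s}"
  define ext where "ext s = (\<lambda>i. if i < length s then s ! i else False)" for s :: "bool list"
  have pre_ext: "pre (ext s) (length s) = s" for s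
    by (rule nth_equalityI) (simp_all add: pre_def ext_def)
  have P6: "\<exists>a\<in>P. a \<in> C s" for s
  proof -
    obtain a where a: "\<And>n. a \<in> C (pre (ext s) n)" using P5 by blast
    have "a \<in> P" unfolding P_def using a pre_len by blast
    moreover have "a \<in> C s" using a[of "length s"] pre_ext by simp
    ultimately show ?thesis by blast
  qed
  have PG: "P \<subseteq> G"
  proof
    fix x assume "x \<in> P"
    have "x \<in> Op n" for n
    proof -
      obtain s where "length s = n" "x \<in> C s" using \<open>x \<in> P\<close> unfolding P_def by blast
      then show ?thesis using P1(3)[of s] by auto
    qed
    then show "x \<in> G" using Op(3) by blast
  qed
  have closedP: "closed P"
  proof -
    have "P = (\<Inter>n. \<Union>(C ` {s. length s = n}))" unfolding P_def by auto
    moreover have "closed (\<Union>(C ` {s. length s = n}))" for n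
      using finite_len[of n] by (intro closed_Union) (auto simp: Cdef)
    ultimately show ?thesis by (simp add: closed_INT)
  qed
  have limpt: "x islimpt P" if x: "x \<in> P" for x
  proof (unfold islimpt_approachable, intro allI impI)
    fix e :: real assume e: "e > 0"
    obtain n where n: "2 * (1/2::real)^n < e" using pow_half_small[OF e] by auto
    obtain s where s: "length s = Suc n" "x \<in> C s" using x unfolding P_def by blast
    define p where "p = take n s"
    define b where "b = s ! n"
    have sp: "s = p @ [b]" using s(1) unfolding p_def b_def
      by (metis lessI take_Suc_conv_app_nth take_all order_refl)
    have lp: "length p = n" using s(1) by (simp add: p_def)
    obtain a where a: "a \<in> P" "a \<in> C (p @ [\<not> b])" using P6 by blast
    have disj: "C (p @ [b]) \<inter> C (p @ [\<not> b]) = {}" using P2(2)[of p] by (cases b) auto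
    have "a \<noteq> x" using a(2) s(2) sp disj by blast
    moreover have "dist a x < e"
    proof -
      have "a \<in> C p" "x \<in> C p" using a(2) s(2) sp P2(1) by blast+
      then have "dist a x \<le> 2 * (1/2)^n" using diam lp by blast
      then show ?thesis using n by simp
    qed
    ultimately show "\<exists>x'\<in>P. x' \<noteq> x \<and> dist x' x < e" using a(1) by blast
  qed
  have pairs: "x \<in> HC (f y)" if xy: "x \<in> P" "y \<in> P" "x \<noteq> y" for x y
  proof -
    have d: "dist x y > 0" using xy by simp
    obtain N0 where N0: "2 * (1/2::real)^N0 < dist x y" using pow_half_small[OF d] by auto
    have "\<forall>n\<ge>N0. \<exists>k. (B (f y) ^^ k) x \<in> Wb n"
    proof (intro allI impI)
      fix n assume n: "n \<ge> N0"
      obtain s where s: "length s = n" "x \<in> C s" using xy(1) unfolding P_def by blast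
      obtain t where t: "length t = n" "y \<in> C t" using xy(2) unfolding P_def by blast
      have "s \<noteq> t"
      proof
        assume "s = t"
        then have "dist x y \<le> 2 * (1/2)^n" using diam s t by blast
        also have "\<dots> \<le> 2 * (1/2)^N0" using pow_half_mono[OF n] by simp
        finally show False using N0 by simp
      qed
      then have "good G f n (C s) (C t)" using P3[of s t] s t by simp
      then show "\<exists>k. (B (f y) ^^ k) x \<in> Wb n" using s t PG xy(2) unfolding good_def by blast
    qed
    then show ?thesis by (rule HC_of_hits)
  qed
  show ?thesis
  proof (rule exI[of _ P], intro conjI)
    show "P \<noteq> {}" using P6[of "[]"] by blast
    show "perfect_set P" unfolding perfect_set_def using closedP limpt by blast
    show "P \<subseteq> G" by (rule PG)
    show "\<forall>x\<in>P. x \<notin> HC (f x)" using PG assms(5) by blast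
    show "\<forall>x\<in>P. \<forall>y\<in>P. x \<noteq> y \<longrightarrow> x \<in> HC (f y)" using pairs by blast
  qed
qed

end
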